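(* For the SG-SAV iteration with $r_0=\sqrt{f(x_0)+c}$, assume (A.3) and (A.4). Then for every $T\ge1$: (i) $r_t>0$ for all $t$, $r_{t+1}\le r_t$, and $r_t-r_{t+1}=\frac{\eta\,r_{t+1}}{2\tilde F_t^2}\|G_t\|^2$; (ii) $\mathbb{E}\big[\sum_{t=0}^{T-1}r_{t+1}\|G_t\|^2\big]\le\frac{2\sqrt{f(x_0)+c}\,B}{\eta}$; (iii) $\mathbb{E}\big[\sum_{t=0}^{T-1}\rho_t^2\|G_t\|^2\big]\le\frac{2(f(x_0)+c)B}{a\eta}$, where $\rho_t:=r_{t+1}/\tilde F_t$; (iv) $\mathbb{E}\big[\sum_{t=0}^{T-1}r_{t+1}|\langle\nabla f(x_t)-G_t,G_t\rangle|\big]\le\sqrt T\,\sigma_0\sqrt{\frac{2(f(x_0)+c)B}{\eta}}$.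
   Context: Let $f:\mathbb{R}^d\to\mathbb{R}$ be continuously differentiable and let $c\ge0$ be a constant with $f^*:=\inf_{x}f(x)>-c$. Let $\xi_0,\xi_1,\dots$ be random variables. For each $x$ and sample $\xi$, let $f(x;\xi)$ be a stochastic function value and $G(x;\xi)\in\mathbb{R}^d$ a stochastic gradient. Write $G_t:=G(x_t;\xi_t)$ and $\tilde F_t:=\sqrt{f(x_t;\xi_t)+c}$. Given $x_0$, $r_0$ and $\eta>0$, the SG-SAV iteration defines $(x_{t+1},r_{t+1})$ as the solution of $$x_{t+1}=x_t-\eta\,\frac{r_{t+1}}{\tilde F_t}\,G_t,\qquad r_{t+1}=r_t+\frac{1}{2\tilde F_t}\langle G_t,\,x_{t+1}-x_t\rangle .$$ (A.3): $\mathbb{E}_{\xi_t}\|G_t-\nabla f(x_t)\|^2\le\sigma_0^2$ for all $t$ (conditional expectation over $\xi_t$ given $\xi_0,\dots,\xi_{t-1}$). (A.4): there are $0<a\le B$ with $a\le f(x)+c\le B$ and $a\le f(x;\xi)+c\le B$ for all $x,\xi$. *)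

theory Defs
  imports "HOL-Probability.Probability"
begin

definition past_sigma :: "'w measure \<Rightarrow> (nat \<Rightarrow> 'w \<Rightarrow> 's) \<Rightarrow> 's measure \<Rightarrow> nat \<Rightarrow> 'w measure" where
  "past_sigma M xi S t = sigma (space M) (\<Union>i<t. {xi i -` A \<inter> space M | A. A \<in> sets S})"

end

theory Submission
  imports Defs
begin

theorem mainTheorem6:
  fixes M :: "'w measure" and S :: "'s measure"
    and xi :: "nat \<Rightarrow> 'w \<Rightarrow> 's"
    and f :: "'a::euclidean_space \<Rightarrow> real" and gradf :: "'a \<Rightarrow> 'a"
    and fs :: "'a \<Rightarrow> 's \<Rightarrow> real" and G :: "'a \<Rightarrow> 's \<Rightarrow> 'a"
    and x :: "nat \<Rightarrow> 'w \<Rightarrow> 'a" and r :: "nat \<Rightarrow> 'w \<Rightarrow> real"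
    and x0 :: 'a and c \<eta> a B \<sigma>0 :: real
  assumes prob: "prob_space M"
    and xi_meas: "\<And>t. xi t \<in> M \<rightarrow>\<^sub>M S"
    and fs_meas: "(\<lambda>p. fs (fst p) (snd p)) \<in> borel_measurable (borel \<Otimes>\<^sub>M S)"
    and G_meas: "(\<lambda>p. G (fst p) (snd p)) \<in> (borel \<Otimes>\<^sub>M S) \<rightarrow>\<^sub>M borel"
    and f_deriv: "\<And>y. (f has_derivative (\<lambda>h. gradf y \<bullet> h)) (at y)"
    and gradf_cont: "continuous_on UNIV gradf"
    and c_nonneg: "c \<ge> 0"
    and inf_f: "(INF y. f y) > - c"
    and eta_pos: "\<eta> > 0"
    and sigma0_nonneg: "\<sigma>0 \<ge> 0"
    and x_init: "\<And>w. w \<in> space M \<Longrightarrow> x 0 w = x0"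
    and r_init: "\<And>w. w \<in> space M \<Longrightarrow> r 0 w = sqrt (f x0 + c)"
    and step_x: "\<And>t w. w \<in> space M \<Longrightarrow>
        x (Suc t) w = x t w - (\<eta> * r (Suc t) w / sqrt (fs (x t w) (xi t w) + c)) *\<^sub>R G (x t w) (xi t w)"
    and step_r: "\<And>t w. w \<in> space M \<Longrightarrow>
        r (Suc t) w = r t w + 1 / (2 * sqrt (fs (x t w) (xi t w) + c))
                      * (G (x t w) (xi t w) \<bullet> (x (Suc t) w - x t w))"
    and A3: "\<And>t. AE w in M. nn_cond_exp M (past_sigma M xi S t)
                 (\<lambda>w. ennreal ((norm (G (x t w) (xi t w) - gradf (x t w)))\<^sup>2)) w
               \<le> ennreal (\<sigma>0\<^sup>2)"
    and a_pos: "0 < a" and a_le_B: "a \<le> B"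
    and A4_f: "\<And>y. a \<le> f y + c \<and> f y + c \<le> B"
    and A4_fs: "\<And>y s. s \<in> space S \<Longrightarrow> a \<le> fs y s + c \<and> fs y s + c \<le> B"
  shows
    "(\<forall>t. \<forall>w\<in>space M.
        r t w > 0 \<and> r (Suc t) w \<le> r t w \<and>
        r t w - r (Suc t) w = \<eta> * r (Suc t) w / (2 * (sqrt (fs (x t w) (xi t w) + c))\<^sup>2)
                                * (norm (G (x t w) (xi t w)))\<^sup>2)
     \<and> (\<forall>T::nat. T \<ge> 1 \<longrightarrow>
        (\<integral>\<^sup>+ w. ennreal (\<Sum>t<T. r (Suc t) w * (norm (G (x t w) (xi t w)))\<^sup>2) \<partial>M)
           \<le> ennreal (2 * sqrt (f x0 + c) * B / \<eta>)
      \<and> (\<integral>\<^sup>+ w. ennreal (\<Sum>t<T. (r (Suc t) w / sqrt (fs (x t w) (xi t w) + c))\<^sup>2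
                                   * (norm (G (x t w) (xi t w)))\<^sup>2) \<partial>M)
           \<le> ennreal (2 * (f x0 + c) * B / (a * \<eta>))
      \<and> (\<integral>\<^sup>+ w. ennreal (\<Sum>t<T. r (Suc t) w
                 * \<bar>(gradf (x t w) - G (x t w) (xi t w)) \<bullet> G (x t w) (xi t w)\<bar>) \<partial>M)
           \<le> ennreal (sqrt (real T) * \<sigma>0 * sqrt (2 * (f x0 + c) * B / \<eta>)))"
proof -
  interpret P: prob_space M by (rule prob)
  define F where "F t w = fs (x t w) (xi t w) + c" for t w
  define g where "g t w = G (x t w) (xi t w)" for t w
  define r0 where "r0 = sqrt (f x0 + c)"
  have xiS: "xi t w \<in> space S" if "w \<in> space M" for t w
    using measurable_space[OF xi_meas that] .
  have Fb: "a \<le> F t w \<and> F t w \<le> B" if "w \<in> space M" for t w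
    unfolding F_def using A4_fs[OF xiS[OF that]] by blast
  have Fpos: "F t w > 0" if "w \<in> space M" for t w using Fb[OF that, of t] a_pos by linarith
  have sqF: "sqrt (F t w) * sqrt (F t w) = F t w" if "w \<in> space M" for t w
    using Fpos[OF that, of t] by simp
  have sqFpos: "sqrt (F t w) > 0" if "w \<in> space M" for t w using Fpos[OF that, of t] by simp
  have rel: "r t w - r (Suc t) w = \<eta> * r (Suc t) w / (2 * F t w) * (norm (g t w))\<^sup>2"
    if w: "w \<in> space M" for t w
  proof -
    define k where "k = \<eta> * r (Suc t) w / sqrt (F t w)"
    have dx: "x (Suc t) w - x t w = - (k *\<^sub>R g t w)"
      using step_x[OF w, of t] unfolding k_def F_def g_def by simp
    have ip: "g t w \<bullet> (x (Suc t) w - x t w) = - k * (norm (g t w))\<^sup>2"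
      unfolding dx by (simp add: power2_norm_eq_inner)
    have "r (Suc t) w = r t w + 1 / (2 * sqrt (F t w)) * (- k * (norm (g t w))\<^sup>2)"
      using step_r[OF w, of t] ip unfolding F_def g_def by simp
    then have "r t w - r (Suc t) w = k * (norm (g t w))\<^sup>2 / (2 * sqrt (F t w))" by simp
    also have "\<dots> = \<eta> * r (Suc t) w / (2 * F t w) * (norm (g t w))\<^sup>2"
      unfolding k_def using sqF[OF w, of t] sqFpos[OF w, of t]
      by (simp add: field_simps)
    finally show ?thesis .
  qed
  have rsol: "r (Suc t) w = r t w / (1 + \<eta> * (norm (g t w))\<^sup>2 / (2 * F t w))"
    if w: "w \<in> space M" for t w
  proof -
    have d: "1 + \<eta> * (norm (g t w))\<^sup>2 / (2 * F t w) > 0"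
      using Fpos[OF w, of t] eta_pos by (simp add: add_pos_nonneg)
    have "r t w = r (Suc t) w * (1 + \<eta> * (norm (g t w))\<^sup>2 / (2 * F t w))"
      using rel[OF w, of t] by (simp add: algebra_simps)
    then show ?thesis using d by (simp add: field_simps)
  qed
  have rpos: "r t w > 0" if w: "w \<in> space M" for t w
  proof (induction t)
    case 0 show ?case using r_init[OF w] A4_f[of x0] a_pos by simp
  next
    case (Suc t)
    have d: "1 + \<eta> * (norm (g t w))\<^sup>2 / (2 * F t w) > 0"
      using Fpos[OF w, of t] eta_pos by (simp add: add_pos_nonneg)
    show ?case using rsol[OF w, of t] Suc d by simp
  qed
  have diffnn: "r t w - r (Suc t) w \<ge> 0" if w: "w \<in> space M" for t w
    using rel[OF w, of t] rpos[OF w, of "Suc t"] Fpos[OF w, of t] eta_pos by simp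
  have rle0: "r t w \<le> r0" if w: "w \<in> space M" for t w
  proof (induction t)
    case 0 show ?case using r_init[OF w] unfolding r0_def by simp
  next
    case (Suc t) show ?case using Suc diffnn[OF w, of t] by simp
  qed
  have part1: "\<forall>t. \<forall>w\<in>space M.
        r t w > 0 \<and> r (Suc t) w \<le> r t w \<and>
        r t w - r (Suc t) w = \<eta> * r (Suc t) w / (2 * (sqrt (fs (x t w) (xi t w) + c))\<^sup>2)
                                * (norm (G (x t w) (xi t w)))\<^sup>2"
  proof (intro allI ballI conjI)
    fix t w assume w: "w \<in> space M"
    show "r t w > 0" using rpos[OF w] .
    show "r (Suc t) w \<le> r t w" using diffnn[OF w, of t] by simp
    show "r t w - r (Suc t) w = \<eta> * r (Suc t) w / (2 * (sqrt (fs (x t w) (xi t w) + c))\<^sup>2)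
                                * (norm (G (x t w) (xi t w)))\<^sup>2"
      using rel[OF w, of t] Fpos[OF w, of t] unfolding F_def g_def by simp
  qed

  have gradm: "gradf \<in> borel_measurable borel"
    by (rule borel_measurable_continuous_onI[OF gradf_cont])
  have gm: "g t \<in> borel_measurable M" if xm: "x t \<in> borel_measurable M" for t
  proof -
    have "(\<lambda>w. (x t w, xi t w)) \<in> M \<rightarrow>\<^sub>M borel \<Otimes>\<^sub>M S"
      using xm xi_meas by (intro measurable_Pair) auto
    from measurable_compose[OF this G_meas] show ?thesis by (simp add: g_def[abs_def])
  qed
  have Fm: "F t \<in> borel_measurable M" if xm: "x t \<in> borel_measurable M" for t
  proof -
    have "(\<lambda>w. (x t w, xi t w)) \<in> M \<rightarrow>\<^sub>M borel \<Otimes>\<^sub>M S"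
      using xm xi_meas by (intro measurable_Pair) auto
    from measurable_compose[OF this fs_meas]
    have "(\<lambda>w. fs (x t w) (xi t w)) \<in> borel_measurable M" by simp
    then show ?thesis unfolding F_def[abs_def] by measurable
  qed
  have meas: "x t \<in> borel_measurable M \<and> r t \<in> borel_measurable M" for t
  proof (induction t)
    case 0
    have "x 0 \<in> borel_measurable M \<longleftrightarrow> (\<lambda>w. x0) \<in> borel_measurable M"
      by (rule measurable_cong) (simp add: x_init)
    moreover have "r 0 \<in> borel_measurable M \<longleftrightarrow> (\<lambda>w. sqrt (f x0 + c)) \<in> borel_measurable M"
      by (rule measurable_cong) (simp add: r_init)
    ultimately show ?case by simp
  next
    case (Suc t)
    then have xm[measurable]: "x t \<in> borel_measurable M" and rm[measurable]: "r t \<in> borel_measurable M" by auto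
    have gm'[measurable]: "g t \<in> borel_measurable M" by (rule gm[OF xm])
    have Fm'[measurable]: "F t \<in> borel_measurable M" by (rule Fm[OF xm])
    have "r (Suc t) \<in> borel_measurable M \<longleftrightarrow>
          (\<lambda>w. r t w / (1 + \<eta> * (norm (g t w))\<^sup>2 / (2 * F t w))) \<in> borel_measurable M"
      by (rule measurable_cong) (simp add: rsol)
    moreover have "(\<lambda>w. r t w / (1 + \<eta> * (norm (g t w))\<^sup>2 / (2 * F t w))) \<in> borel_measurable M"
      by measurable
    ultimately have rsm[measurable]: "r (Suc t) \<in> borel_measurable M" by simp
    have "x (Suc t) \<in> borel_measurable M \<longleftrightarrow>
          (\<lambda>w. x t w - (\<eta> * r (Suc t) w / sqrt (F t w)) *\<^sub>R g t w) \<in> borel_measurable M"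
      by (rule measurable_cong) (simp add: step_x F_def g_def)
    moreover have "(\<lambda>w. x t w - (\<eta> * r (Suc t) w / sqrt (F t w)) *\<^sub>R g t w) \<in> borel_measurable M"
      by measurable
    ultimately show ?case using rsm by simp
  qed

  have r0sq: "r0\<^sup>2 = f x0 + c" unfolding r0_def using A4_f[of x0] a_pos by simp
  have r0pos: "r0 > 0" unfolding r0_def using A4_f[of x0] a_pos by simp
  have intb: "(\<integral>\<^sup>+w. ennreal (h w) \<partial>M) \<le> ennreal K" if hb: "\<And>w. w \<in> space M \<Longrightarrow> h w \<le> K" for h K
  proof -
    have "(\<integral>\<^sup>+w. ennreal (h w) \<partial>M) \<le> (\<integral>\<^sup>+w. ennreal K \<partial>M)"
      by (rule nn_integral_mono) (simp add: ennreal_leI hb)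
    also have "\<dots> = ennreal K" using P.emeasure_space_1 by simp
    finally show ?thesis .
  qed
  have tele: "(\<Sum>t<T. r t w - r (Suc t) w) = r 0 w - r T w" for T w
    by (rule sum_lessThan_telescope')
  have bnd2: "(\<Sum>t<T. r (Suc t) w * (norm (g t w))\<^sup>2) \<le> 2 * r0 * B / \<eta>"
    if w: "w \<in> space M" for T w
  proof -
    have "r (Suc t) w * (norm (g t w))\<^sup>2 \<le> (2 * B / \<eta>) * (r t w - r (Suc t) w)" for t
    proof -
      have "r (Suc t) w * (norm (g t w))\<^sup>2 = (2 * F t w / \<eta>) * (r t w - r (Suc t) w)"
        using rel[OF w, of t] Fpos[OF w, of t] eta_pos by (simp add: field_simps)
      also have "\<dots> \<le> (2 * B / \<eta>) * (r t w - r (Suc t) w)"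
        using Fb[OF w, of t] eta_pos diffnn[OF w, of t]
        by (intro mult_right_mono divide_right_mono) auto
      finally show ?thesis .
    qed
    then have "(\<Sum>t<T. r (Suc t) w * (norm (g t w))\<^sup>2) \<le> (\<Sum>t<T. (2 * B / \<eta>) * (r t w - r (Suc t) w))"
      by (rule sum_mono)
    also have "\<dots> = (2 * B / \<eta>) * (r 0 w - r T w)" by (simp only: sum_distrib_left[symmetric] tele)
    also have "\<dots> \<le> (2 * B / \<eta>) * r0"
      using rpos[OF w, of T] r_init[OF w] eta_pos a_pos a_le_B unfolding r0_def
      by (intro mult_left_mono) auto
    finally show ?thesis by (simp add: mult_ac)
  qed
  have bnd3: "(\<Sum>t<T. (r (Suc t) w / sqrt (F t w))\<^sup>2 * (norm (g t w))\<^sup>2) \<le> 2 * (f x0 + c) * B / (a * \<eta>)"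
    if w: "w \<in> space M" for T w
  proof -
    have "(r (Suc t) w / sqrt (F t w))\<^sup>2 * (norm (g t w))\<^sup>2 \<le> (2 * r0 / \<eta>) * (r t w - r (Suc t) w)" for t
    proof -
      have e1: "2 * F t w * (r t w - r (Suc t) w) = \<eta> * r (Suc t) w * (norm (g t w))\<^sup>2"
        using rel[OF w, of t] Fpos[OF w, of t] by (simp add: field_simps)
      have "(2 * r (Suc t) w / \<eta>) * (r t w - r (Suc t) w)
          = r (Suc t) w / (\<eta> * F t w) * (2 * F t w * (r t w - r (Suc t) w))"
        using Fpos[OF w, of t] eta_pos by (simp add: field_simps)
      also have "\<dots> = r (Suc t) w / (\<eta> * F t w) * (\<eta> * r (Suc t) w * (norm (g t w))\<^sup>2)"
        by (simp only: e1)
      also have "\<dots> = (r (Suc t) w / sqrt (F t w))\<^sup>2 * (norm (g t w))\<^sup>2"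
        using Fpos[OF w, of t] eta_pos by (simp add: field_simps power2_eq_square)
      finally have "(r (Suc t) w / sqrt (F t w))\<^sup>2 * (norm (g t w))\<^sup>2 = (2 * r (Suc t) w / \<eta>) * (r t w - r (Suc t) w)" by simp
      also have "\<dots> \<le> (2 * r0 / \<eta>) * (r t w - r (Suc t) w)"
        using rle0[OF w, of "Suc t"] eta_pos diffnn[OF w, of t]
        by (intro mult_right_mono divide_right_mono) auto
      finally show ?thesis .
    qed
    then have "(\<Sum>t<T. (r (Suc t) w / sqrt (F t w))\<^sup>2 * (norm (g t w))\<^sup>2) \<le> (\<Sum>t<T. (2 * r0 / \<eta>) * (r t w - r (Suc t) w))"
      by (rule sum_mono)
    also have "\<dots> = (2 * r0 / \<eta>) * (r 0 w - r T w)" by (simp only: sum_distrib_left[symmetric] tele)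
    also have "\<dots> \<le> (2 * r0 / \<eta>) * r0"
      using rpos[OF w, of T] r_init[OF w] eta_pos r0pos unfolding r0_def
      by (intro mult_left_mono) auto
    also have "\<dots> = 2 * (f x0 + c) / \<eta>" using r0sq by (simp add: power2_eq_square)
    also have "\<dots> \<le> 2 * (f x0 + c) * B / (a * \<eta>)"
    proof -
      have "2 * (f x0 + c) / \<eta> * 1 \<le> 2 * (f x0 + c) / \<eta> * (B / a)"
        using a_pos a_le_B eta_pos A4_f[of x0] by (intro mult_left_mono) auto
      then show ?thesis by (simp add: field_simps)
    qed
    finally show ?thesis .
  qed

  define e where "e t w = gradf (x t w) - g t w" for t w
  have em[measurable]: "e t \<in> borel_measurable M" for t
  proof -
    have xm[measurable]: "x t \<in> borel_measurable M" using meas by blast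
    have [measurable]: "g t \<in> borel_measurable M" by (rule gm[OF xm])
    have [measurable]: "(\<lambda>w. gradf (x t w)) \<in> borel_measurable M"
      using measurable_compose[OF xm gradm] by simp
    show ?thesis unfolding e_def[abs_def] by measurable
  qed
  have Ee: "(\<integral>\<^sup>+w. ennreal ((norm (e t w))\<^sup>2) \<partial>M) \<le> ennreal (\<sigma>0\<^sup>2)" for t
  proof -
    have sub: "subalgebra M (past_sigma M xi S t)"
    proof -
      let ?A = "(\<Union>i<t. {xi i -` A \<inter> space M | A. A \<in> sets S})"
      have A: "?A \<subseteq> sets M" using measurable_sets[OF xi_meas] by blast
      have AP: "?A \<subseteq> Pow (space M)" by blast
      show ?thesis unfolding subalgebra_def past_sigma_def
        using sets.sigma_sets_subset[OF A] sets_measure_of[OF AP] space_measure_of_conv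
        by simp
    qed
    interpret Q: finite_measure_subalgebra M "past_sigma M xi S t"
      by (intro finite_measure_subalgebra.intro finite_measure_subalgebra_axioms.intro
          P.finite_measure_axioms sub)
    have m[measurable]: "(\<lambda>w. ennreal ((norm (G (x t w) (xi t w) - gradf (x t w)))\<^sup>2)) \<in> borel_measurable M"
    proof -
      have "(\<lambda>w. ennreal ((norm (e t w))\<^sup>2)) \<in> borel_measurable M" by measurable
      moreover have "(\<lambda>w. ennreal ((norm (G (x t w) (xi t w) - gradf (x t w)))\<^sup>2)) = (\<lambda>w. ennreal ((norm (e t w))\<^sup>2))"
        unfolding e_def g_def by (simp add: norm_minus_commute)
      ultimately show ?thesis by simp
    qed
    have "(\<integral>\<^sup>+w. ennreal ((norm (e t w))\<^sup>2) \<partial>M)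
        = (\<integral>\<^sup>+w. ennreal ((norm (G (x t w) (xi t w) - gradf (x t w)))\<^sup>2) \<partial>M)"
      unfolding e_def g_def by (simp add: norm_minus_commute)
    also have "\<dots> = (\<integral>\<^sup>+w. 1 * nn_cond_exp M (past_sigma M xi S t)
                 (\<lambda>w. ennreal ((norm (G (x t w) (xi t w) - gradf (x t w)))\<^sup>2)) w \<partial>M)"
      using Q.nn_cond_exp_intg[of "\<lambda>_. 1", OF _ m] by simp
    also have "\<dots> \<le> (\<integral>\<^sup>+w. ennreal (\<sigma>0\<^sup>2) \<partial>M)"
      by (rule nn_integral_mono_AE) (use A3[of t] in auto)
    also have "\<dots> = ennreal (\<sigma>0\<^sup>2)" using P.emeasure_space_1 by simp
    finally show ?thesis .
  qed
  have Esum: "(\<integral>\<^sup>+w. ennreal (\<Sum>t<T. (norm (e t w))\<^sup>2) \<partial>M) \<le> ennreal (real T * \<sigma>0\<^sup>2)" for T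
  proof -
    have "(\<integral>\<^sup>+w. ennreal (\<Sum>t<T. (norm (e t w))\<^sup>2) \<partial>M) = (\<integral>\<^sup>+w. (\<Sum>t<T. ennreal ((norm (e t w))\<^sup>2)) \<partial>M)"
      by (simp add: sum_ennreal)
    also have "\<dots> = (\<Sum>t<T. (\<integral>\<^sup>+w. ennreal ((norm (e t w))\<^sup>2) \<partial>M))"
      by (rule nn_integral_sum) measurable
    also have "\<dots> \<le> (\<Sum>t<T. ennreal (\<sigma>0\<^sup>2))" by (rule sum_mono) (rule Ee)
    also have "\<dots> = ennreal (real T * \<sigma>0\<^sup>2)" by (simp add: ennreal_mult ennreal_of_nat_eq_real_of_nat)
    finally show ?thesis .
  qed

  define I where "I T w = (\<Sum>t<T. r (Suc t) w * \<bar>e t w \<bullet> g t w\<bar>)" for T w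
  have ptw: "I T w \<le> L * r0 / 2 * (\<Sum>t<T. (norm (e t w))\<^sup>2) + r0 * B / (L * \<eta>)"
    if w: "w \<in> space M" and L: "L > 0" for T w L
  proof -
    have trm: "r (Suc t) w * \<bar>e t w \<bullet> g t w\<bar> \<le> L * r0 / 2 * (norm (e t w))\<^sup>2
                 + 1 / (2 * L) * (r (Suc t) w * (norm (g t w))\<^sup>2)" for t
    proof -
      define u where "u = norm (e t w)"
      define v where "v = norm (g t w)"
      have rp: "r (Suc t) w > 0" using rpos[OF w] .
      have cs: "\<bar>e t w \<bullet> g t w\<bar> \<le> u * v" unfolding u_def v_def by (rule Cauchy_Schwarz_ineq2)
      have "0 \<le> (L * u - v)\<^sup>2" by simp
      then have "2 * L * (u * v) \<le> L\<^sup>2 * u\<^sup>2 + v\<^sup>2" by (simp add: power2_eq_square algebra_simps)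
      then have am: "u * v \<le> L / 2 * u\<^sup>2 + v\<^sup>2 / (2 * L)" using L
        by (simp add: field_simps power2_eq_square)
      have "r (Suc t) w * \<bar>e t w \<bullet> g t w\<bar> \<le> r (Suc t) w * (L / 2 * u\<^sup>2 + v\<^sup>2 / (2 * L))"
        using cs am rp by (intro mult_left_mono) auto
      also have "\<dots> = r (Suc t) w * (L / 2) * u\<^sup>2 + 1 / (2 * L) * (r (Suc t) w * v\<^sup>2)"
        by (simp add: algebra_simps)
      also have "\<dots> \<le> r0 * (L / 2) * u\<^sup>2 + 1 / (2 * L) * (r (Suc t) w * v\<^sup>2)"
        using rle0[OF w, of "Suc t"] L by (intro add_right_mono mult_right_mono) auto
      finally show ?thesis unfolding u_def v_def by (simp add: mult_ac)
    qed
    have "I T w \<le> (\<Sum>t<T. L * r0 / 2 * (norm (e t w))\<^sup>2 + 1 / (2 * L) * (r (Suc t) w * (norm (g t w))\<^sup>2))"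
      unfolding I_def by (rule sum_mono) (rule trm)
    also have "\<dots> = L * r0 / 2 * (\<Sum>t<T. (norm (e t w))\<^sup>2) + 1 / (2 * L) * (\<Sum>t<T. r (Suc t) w * (norm (g t w))\<^sup>2)"
      by (simp add: sum.distrib sum_distrib_left)
    also have "\<dots> \<le> L * r0 / 2 * (\<Sum>t<T. (norm (e t w))\<^sup>2) + 1 / (2 * L) * (2 * r0 * B / \<eta>)"
      using bnd2[OF w, of T] L by (intro add_left_mono mult_left_mono) auto
    also have "\<dots> = L * r0 / 2 * (\<Sum>t<T. (norm (e t w))\<^sup>2) + r0 * B / (L * \<eta>)"
      using L eta_pos by (simp add: field_simps)
    finally show ?thesis .
  qed
  have intL: "(\<integral>\<^sup>+w. ennreal (I T w) \<partial>M) \<le> ennreal (L * r0 / 2 * (real T * \<sigma>0\<^sup>2) + r0 * B / (L * \<eta>))"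
    if L: "L > 0" for T L
  proof -
    have c1: "L * r0 / 2 \<ge> 0" using L r0pos by simp
    have c2: "r0 * B / (L * \<eta>) \<ge> 0" using L r0pos eta_pos a_pos a_le_B by simp
    have "(\<integral>\<^sup>+w. ennreal (I T w) \<partial>M)
       \<le> (\<integral>\<^sup>+w. ennreal (L * r0 / 2) * ennreal (\<Sum>t<T. (norm (e t w))\<^sup>2) + ennreal (r0 * B / (L * \<eta>)) \<partial>M)"
    proof (rule nn_integral_mono)
      fix w assume w: "w \<in> space M"
      have "ennreal (I T w) \<le> ennreal (L * r0 / 2 * (\<Sum>t<T. (norm (e t w))\<^sup>2) + r0 * B / (L * \<eta>))"
        by (rule ennreal_leI) (rule ptw[OF w L])
      also have "\<dots> = ennreal (L * r0 / 2) * ennreal (\<Sum>t<T. (norm (e t w))\<^sup>2) + ennreal (r0 * B / (L * \<eta>))"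
      proof -
        have Snn: "(\<Sum>t<T. (norm (e t w))\<^sup>2) \<ge> 0" by (simp add: sum_nonneg)
        have "ennreal (L * r0 / 2 * (\<Sum>t<T. (norm (e t w))\<^sup>2) + r0 * B / (L * \<eta>))
            = ennreal (L * r0 / 2 * (\<Sum>t<T. (norm (e t w))\<^sup>2)) + ennreal (r0 * B / (L * \<eta>))"
          by (rule ennreal_plus) (use c1 c2 Snn in auto)
        moreover have "ennreal (L * r0 / 2 * (\<Sum>t<T. (norm (e t w))\<^sup>2))
            = ennreal (L * r0 / 2) * ennreal (\<Sum>t<T. (norm (e t w))\<^sup>2)"
          by (rule ennreal_mult) (use c1 Snn in auto)
        ultimately show ?thesis by simp
      qed
      finally show "ennreal (I T w) \<le> \<dots>" .
    qed
    also have "\<dots> = ennreal (L * r0 / 2) * (\<integral>\<^sup>+w. ennreal (\<Sum>t<T. (norm (e t w))\<^sup>2) \<partial>M) + ennreal (r0 * B / (L * \<eta>))"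
      using P.emeasure_space_1 by (simp add: nn_integral_add nn_integral_cmult)
    also have "\<dots> \<le> ennreal (L * r0 / 2) * ennreal (real T * \<sigma>0\<^sup>2) + ennreal (r0 * B / (L * \<eta>))"
      by (intro add_right_mono mult_left_mono Esum) auto
    also have "\<dots> = ennreal (L * r0 / 2 * (real T * \<sigma>0\<^sup>2) + r0 * B / (L * \<eta>))"
    proof -
      have Snn: "real T * \<sigma>0\<^sup>2 \<ge> 0" by simp
      have "ennreal (L * r0 / 2 * (real T * \<sigma>0\<^sup>2) + r0 * B / (L * \<eta>))
          = ennreal (L * r0 / 2 * (real T * \<sigma>0\<^sup>2)) + ennreal (r0 * B / (L * \<eta>))"
        by (rule ennreal_plus) (use c1 c2 Snn in auto)
      moreover have "ennreal (L * r0 / 2 * (real T * \<sigma>0\<^sup>2))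
          = ennreal (L * r0 / 2) * ennreal (real T * \<sigma>0\<^sup>2)"
        by (rule ennreal_mult) (use c1 Snn in auto)
      ultimately show ?thesis by simp
    qed
    finally show ?thesis .
  qed

  have p4: "(\<integral>\<^sup>+w. ennreal (I T w) \<partial>M) \<le> ennreal (sqrt (real T) * \<sigma>0 * sqrt (2 * (f x0 + c) * B / \<eta>))"
    if T: "T \<ge> 1" for T
  proof (cases "\<sigma>0 = 0")
    case True
    have sm[measurable]: "(\<lambda>w. ennreal (\<Sum>t<T. (norm (e t w))\<^sup>2)) \<in> borel_measurable M" by measurable
    have "(\<integral>\<^sup>+w. ennreal (\<Sum>t<T. (norm (e t w))\<^sup>2) \<partial>M) = 0"
      using Esum[of T] True by simp
    then have ae: "AE w in M. ennreal (\<Sum>t<T. (norm (e t w))\<^sup>2) = 0"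
      by (subst (asm) nn_integral_0_iff_AE) auto
    have "AE w in M. ennreal (I T w) = 0"
      using ae
    proof eventually_elim
      case (elim w)
      then have "(\<Sum>t<T. (norm (e t w))\<^sup>2) = 0"
        by (simp add: sum_nonneg)
      then have "\<forall>t\<in>{..<T}. (norm (e t w))\<^sup>2 = 0"
        by (subst (asm) sum_nonneg_eq_0_iff) auto
      then have "\<forall>t<T. e t w = 0" by simp
      then show ?case unfolding I_def by simp
    qed
    then have "(\<integral>\<^sup>+w. ennreal (I T w) \<partial>M) = (\<integral>\<^sup>+w. 0 \<partial>M)"
      by (rule nn_integral_cong_AE)
    then show ?thesis by simp
  next
    case False
    then have sp: "\<sigma>0 > 0" using sigma0_nonneg by simp
    define s where "s = sqrt (real T)"
    define q where "q = sqrt (2 * B / \<eta>)"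
    have spos: "s > 0" unfolding s_def using T by simp
    have s2: "s * s = real T" unfolding s_def by simp
    have qpos: "q > 0" unfolding q_def using eta_pos a_pos a_le_B by simp
    have q2: "q * q = 2 * B / \<eta>" unfolding q_def using eta_pos a_pos a_le_B by simp
    define L where "L = q / (s * \<sigma>0)"
    have Lpos: "L > 0" unfolding L_def using qpos spos sp by simp
    have e1: "L * r0 / 2 * (real T * \<sigma>0\<^sup>2) = r0 * q * s * \<sigma>0 / 2"
      unfolding L_def s2[symmetric] using spos sp by (simp add: field_simps power2_eq_square)
    have Beq: "B = q * q * \<eta> / 2" using q2 eta_pos by (simp add: field_simps)
    have e2: "r0 * B / (L * \<eta>) = r0 * q * s * \<sigma>0 / 2"
      unfolding L_def Beq using spos sp qpos eta_pos by (simp add: field_simps power2_eq_square)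
    have e3: "sqrt (2 * (f x0 + c) * B / \<eta>) = r0 * q"
    proof -
      have "2 * (f x0 + c) * B / \<eta> = r0\<^sup>2 * (2 * B / \<eta>)" using r0sq by simp
      then have "sqrt (2 * (f x0 + c) * B / \<eta>) = sqrt (r0\<^sup>2) * sqrt (2 * B / \<eta>)"
        by (simp only: real_sqrt_mult)
      then show ?thesis unfolding q_def using r0pos by simp
    qed
    have "(\<integral>\<^sup>+w. ennreal (I T w) \<partial>M) \<le> ennreal (L * r0 / 2 * (real T * \<sigma>0\<^sup>2) + r0 * B / (L * \<eta>))"
      by (rule intL[OF Lpos])
    also have "L * r0 / 2 * (real T * \<sigma>0\<^sup>2) + r0 * B / (L * \<eta>) = sqrt (real T) * \<sigma>0 * sqrt (2 * (f x0 + c) * B / \<eta>)"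
      unfolding e1 e2 e3 s_def[symmetric] by simp
    finally show ?thesis .
  qed
  show ?thesis
  proof (rule conjI[OF part1], intro allI impI conjI)
    fix T :: nat assume T: "T \<ge> 1"
    show "(\<integral>\<^sup>+ w. ennreal (\<Sum>t<T. r (Suc t) w * (norm (G (x t w) (xi t w)))\<^sup>2) \<partial>M)
           \<le> ennreal (2 * sqrt (f x0 + c) * B / \<eta>)"
      using intb[OF bnd2] unfolding g_def r0_def .
    show "(\<integral>\<^sup>+ w. ennreal (\<Sum>t<T. (r (Suc t) w / sqrt (fs (x t w) (xi t w) + c))\<^sup>2
                                   * (norm (G (x t w) (xi t w)))\<^sup>2) \<partial>M)
           \<le> ennreal (2 * (f x0 + c) * B / (a * \<eta>))"
      using intb[OF bnd3] unfolding g_def F_def .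
    show "(\<integral>\<^sup>+ w. ennreal (\<Sum>t<T. r (Suc t) w
                 * \<bar>(gradf (x t w) - G (x t w) (xi t w)) \<bullet> G (x t w) (xi t w)\<bar>) \<partial>M)
           \<le> ennreal (sqrt (real T) * \<sigma>0 * sqrt (2 * (f x0 + c) * B / \<eta>))"
      using p4[OF T] unfolding I_def e_def g_def .
  qed
qed

end
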